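(* Let $c\geq 1$ be an integer. For every integer $n\geq 1$, $$ \bar a_c(n) \equiv \begin{cases} 2 \pmod{4} & \text{if } n = k^2 \text{ for some integer } k, \\ 2(c+1) \pmod{4} & \text{if } n = 2k^2 \text{ for some integer } k, \\ 0 \pmod 4 & \text{otherwise}. \end{cases} $$
   Context: For $|q|<1$ and integers $m\geq 1$, write $f_m:=\prod_{j\geq 1}(1-q^{jm})$. For an integer $c\geq 1$, the generalized overcubic partition function $\bar a_c(n)$ is defined by $$\sum_{n\geq 0}\bar a_c(n)q^n=\frac{f_4^{c-1}}{f_1^2f_2^{2c-3}}.$$ Combinatorially, $\bar a_c(n)$ counts overpartitions of $n$ (partitions in which the first occurrence of each part size may be overlined) in which each even part may appear in $c$ different colors (the overlining rule being applied to each colored part size separately), while odd parts have only one color. *)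

theory Defs
  imports "HOL-Computational_Algebra.Formal_Power_Series"
begin

text \<open>f_m = prod_{j>=1} (1 - q^(jm)) as a formal power series over the rationals.
  The n-th coefficient of the infinite product equals the n-th coefficient of the
  finite product over 1 <= j <= n (all further factors are 1 mod q^(n+1)).\<close>
definition eulerf :: "nat \<Rightarrow> rat fps" where
  "eulerf m = Abs_fps (\<lambda>k. fps_nth (\<Prod>j\<in>{1..k}. (1 - fps_X ^ (j * m))) k)"

text \<open>Generating function f_4^(c-1) / (f_1^2 f_2^(2c-3)), written as
  f_4^(c-1) f_2^3 / (f_1^2 f_2^(2c)) so that the exponent is natural also for c = 1.\<close>
definition overcubic_gf :: "nat \<Rightarrow> rat fps" where
  "overcubic_gf c = eulerf 4 ^ (c - 1) * eulerf 2 ^ 3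
      * inverse (eulerf 1 ^ 2 * eulerf 2 ^ (2 * c))"

definition abar :: "nat \<Rightarrow> nat \<Rightarrow> rat" where
  "abar c n = fps_nth (overcubic_gf c) n"

end

theory Submission
  imports Defs
begin
unbundle fps_syntax

definition Zs :: "rat fps \<Rightarrow> bool" where "Zs f \<longleftrightarrow> (\<forall>k. f $ k \<in> \<int>)"
definition mdv :: "int \<Rightarrow> rat \<Rightarrow> bool" where "mdv M x \<longleftrightarrow> (\<exists>y\<in>\<int>. x = of_int M * y)"
definition R :: "int \<Rightarrow> nat \<Rightarrow> rat fps \<Rightarrow> rat fps \<Rightarrow> bool" where
  "R M N f g \<longleftrightarrow> (\<forall>k\<le>N. mdv M (f $ k - g $ k))"

lemma mdv_0[simp]: "mdv M 0" unfolding mdv_def by (rule bexI[of _ 0]) auto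
lemma mdv_add: "mdv M x \<Longrightarrow> mdv M y \<Longrightarrow> mdv M (x + y)"
  unfolding mdv_def by (metis Ints_add distrib_left)
lemma mdv_neg: "mdv M x \<Longrightarrow> mdv M (- x)"
  unfolding mdv_def by (auto intro!: bexI[where x="- _"])
lemma mdv_diff: "mdv M x \<Longrightarrow> mdv M y \<Longrightarrow> mdv M (x - y)"
  using mdv_add[of M x "-y"] mdv_neg[of M y] by simp
lemma mdv_mult: "mdv M x \<Longrightarrow> z \<in> \<int> \<Longrightarrow> mdv M (x * z)"
  unfolding mdv_def by (auto intro!: bexI[where x="_ * _"])
lemma mdv_sum: "(\<And>i. i \<in> A \<Longrightarrow> mdv M (f i)) \<Longrightarrow> mdv M (sum f A)"
  by (induction A rule: infinite_finite_induct) (auto intro: mdv_add)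
lemma mdv_0_iff: "mdv 0 x \<longleftrightarrow> x = 0" unfolding mdv_def by auto
lemma mdv_mult_int: "y \<in> \<int> \<Longrightarrow> mdv M (of_int M * y)" unfolding mdv_def by auto

lemma R_refl[simp]: "R M N f f" unfolding R_def by simp
lemma R_sym: "R M N f g \<Longrightarrow> R M N g f" unfolding R_def
  using mdv_neg by (metis minus_diff_eq)
lemma R_trans: "R M N f g \<Longrightarrow> R M N g h \<Longrightarrow> R M N f h" unfolding R_def
  using mdv_add by fastforce
lemma R_add: "R M N f g \<Longrightarrow> R M N f' g' \<Longrightarrow> R M N (f + f') (g + g')" unfolding R_def
  using mdv_add by (fastforce simp: algebra_simps)
lemma R_0_M: "R 0 N f g \<Longrightarrow> R M N f g" unfolding R_def by (simp add: mdv_0_iff)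

lemma Zs_mult: "Zs f \<Longrightarrow> Zs g \<Longrightarrow> Zs (f * g)"
  unfolding Zs_def fps_mult_nth by auto
lemma Zs_add: "Zs f \<Longrightarrow> Zs g \<Longrightarrow> Zs (f + g)"
  unfolding Zs_def by auto
lemma Zs_diff: "Zs f \<Longrightarrow> Zs g \<Longrightarrow> Zs (f - g)"
  unfolding Zs_def by auto
lemma Zs_0[simp]: "Zs 0" unfolding Zs_def by simp
lemma Zs_1[simp]: "Zs 1" unfolding Zs_def by (simp add: fps_one_nth)
lemma Zs_X_pow[simp]: "Zs (fps_X ^ k)" unfolding Zs_def by simp
lemma Zs_const_int[simp]: "Zs (fps_const (of_int a))" unfolding Zs_def by simp
lemma Zs_const_nat[simp]: "Zs (fps_const (of_nat a))" unfolding Zs_def by simp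
lemma Zs_const_num[simp]: "Zs (fps_const (numeral a))" unfolding Zs_def by simp
lemma Zs_pow: "Zs f \<Longrightarrow> Zs (f ^ e)"
  by (induction e) (auto intro: Zs_mult)
lemma Zs_prod: "(\<And>i. i \<in> A \<Longrightarrow> Zs (f i)) \<Longrightarrow> Zs (prod f A)"
  by (induction A rule: infinite_finite_induct) (auto intro: Zs_mult)
lemma Zs_sum: "(\<And>i. i \<in> A \<Longrightarrow> Zs (f i)) \<Longrightarrow> Zs (sum f A)"
  by (induction A rule: infinite_finite_induct) (auto intro: Zs_add)

lemma R_mult_right: "R M N f g \<Longrightarrow> Zs h \<Longrightarrow> R M N (f * h) (g * h)"
  unfolding R_def
proof (intro allI impI)
  fix k assume a: "\<forall>k\<le>N. mdv M (f $ k - g $ k)" "Zs h" "k \<le> N"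
  have "(f * h) $ k - (g * h) $ k = (\<Sum>i=0..k. (f$i - g$i) * h$(k-i))"
    by (simp add: fps_mult_nth sum_subtractf algebra_simps)
  also have "mdv M \<dots>" using a by (auto intro!: mdv_sum mdv_mult simp: Zs_def)
  finally show "mdv M ((f * h) $ k - (g * h) $ k)" .
qed
lemma R_mult_left: "R M N f g \<Longrightarrow> Zs h \<Longrightarrow> R M N (h * f) (h * g)"
  using R_mult_right by (metis mult.commute)
lemma R_mult: "R M N f g \<Longrightarrow> R M N f' g' \<Longrightarrow> Zs g \<Longrightarrow> Zs f' \<Longrightarrow> R M N (f * f') (g * g')"
  by (meson R_mult_left R_mult_right R_trans)
lemma R_pow: "R M N f g \<Longrightarrow> Zs f \<Longrightarrow> Zs g \<Longrightarrow> R M N (f ^ e) (g ^ e)"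
  by (induction e) (auto intro: R_mult Zs_pow)
lemma R_exact: "f = g + fps_const (of_int M) * W \<Longrightarrow> Zs W \<Longrightarrow> R M N f g"
  unfolding R_def Zs_def by (auto intro: mdv_mult_int)

lemma Zs_inverse: assumes "Zs f" "f $ 0 = 1" shows "Zs (inverse f)"
proof -
  have fi: "f * inverse f = 1" using assms by (intro inverse_mult_eq_1') auto
  have "inverse f $ k \<in> \<int>" for k
  proof (induction k rule: less_induct)
    case (less k)
    show ?case
    proof (cases k)
      case 0 then show ?thesis using assms by simp
    next
      case (Suc j)
      have "0 = (f * inverse f) $ k" using fi Suc by (simp add: fps_one_nth)
      also have "\<dots> = (\<Sum>i=0..k. f$i * inverse f $ (k - i))" by (rule fps_mult_nth)
      also have "\<dots> = f$0 * inverse f $ k + (\<Sum>i=1..k. f$i * inverse f $ (k - i))"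
        using Suc by (simp add: sum.atLeast_Suc_atMost)
      finally have "inverse f $ k = - (\<Sum>i=1..k. f$i * inverse f $ (k - i))"
        using assms by (simp add: algebra_simps)
      also have "\<dots> \<in> \<int>" using less assms(1) unfolding Zs_def
        by (intro Ints_minus Ints_sum Ints_mult) auto
      finally show ?thesis .
    qed
  qed
  then show ?thesis unfolding Zs_def by auto
qed


lemma divisor_parity:
  fixes k :: nat assumes "k > 0"
  shows "odd (card {d. d dvd k}) \<longleftrightarrow> (\<exists>j. k = j^2)"
proof -
  define D where "D = {d. d dvd k}"
  define A where "A = {d\<in>D. d*d < k}"
  define B where "B = {d\<in>D. d*d > k}"
  define C where "C = {d\<in>D. d*d = k}"
  have fD: "finite D" unfolding D_def using assms by simp
  have DU: "D = A \<union> B \<union> C" unfolding A_def B_def C_def by auto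
  have cD: "card D = card A + card B + card C"
  proof -
    have f: "finite A" "finite B" "finite C" using fD DU by auto
    have "card (A \<union> B \<union> C) = card (A \<union> B) + card C"
      by (rule card_Un_disjoint) (use f in \<open>auto simp: A_def B_def C_def\<close>)
    moreover have "card (A \<union> B) = card A + card B"
      by (rule card_Un_disjoint) (use f in \<open>auto simp: A_def B_def\<close>)
    ultimately show ?thesis using DU by simp
  qed
  have bij: "bij_betw (\<lambda>d. k div d) A B"
  proof (rule bij_betwI[where g="\<lambda>d. k div d"])
    show "(\<lambda>d. k div d) \<in> A \<rightarrow> B"
    proof
      fix d assume "d \<in> A"
      then have d: "d dvd k" "d*d < k" unfolding A_def D_def by auto
      then obtain e where e: "k = d * e" by blast
      have "d < e" using d e by (metis mult_less_cancel1 not_less_zero not_less)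
      then have "d * e < e * e" by (simp add: mult_strict_right_mono)
      then show "k div d \<in> B" using e d assms by (auto simp: B_def D_def)
    qed
    show "(\<lambda>d. k div d) \<in> B \<rightarrow> A"
    proof
      fix d assume "d \<in> B"
      then have d: "d dvd k" "d*d > k" unfolding B_def D_def by auto
      then obtain e where e: "k = d * e" by blast
      have "e < d" using d e by (metis mult_less_cancel1 not_less_zero not_less)
      moreover have "e > 0" using e assms by (cases e) auto
      ultimately have "e * e < d * e" by (simp add: mult_strict_right_mono)
      then show "k div d \<in> A" using e d assms by (auto simp: A_def D_def)
    qed
    show "k div (k div x) = x" if "x \<in> A" for x using that assms
      by (auto simp: A_def D_def)
    show "k div (k div y) = y" if "y \<in> B" for y using that assms
      by (auto simp: B_def D_def)
  qed
  have cAB: "card A = card B" using bij_betw_same_card[OF bij] .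
  have cC: "card C = (if \<exists>j. k = j^2 then 1 else 0)"
  proof (cases "\<exists>j. k = j^2")
    case True
    then obtain j where j: "k = j^2" by blast
    have "C = {j}"
    proof -
      have "d*d = j*j \<longleftrightarrow> d = j" for d :: nat
        by (metis power2_eq_square power2_eq_imp_eq zero_le)
      then show ?thesis unfolding C_def D_def j by (auto simp: power2_eq_square)
    qed
    then show ?thesis using True by simp
  next
    case False
    then have "C = {}" unfolding C_def by (auto simp: power2_eq_square)
    then show ?thesis using False by simp
  qed
  show ?thesis using cD cAB cC unfolding D_def[symmetric] by auto
qed


lemma fps_numeral_mult_nth[simp]: "(numeral c * f :: rat fps) $ k = numeral c * f $ k"
  by (simp add: numeral_fps_const)
lemma fps_of_nat_mult_nth[simp]: "(of_nat c * f :: rat fps) $ k = of_nat c * f $ k"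
  by (simp flip: fps_of_nat)
lemma Zs_numeral[simp]: "Zs (numeral c)" unfolding Zs_def by (simp add: fps_numeral_nth)
lemma Zs_of_nat[simp]: "Zs (of_nat c)" unfolding Zs_def by (simp flip: fps_of_nat)
lemma R_exact4: "f = g + 4 * W \<Longrightarrow> Zs W \<Longrightarrow> R 4 N f g"
  by (rule R_exact) (simp_all add: numeral_fps_const)

definition u :: "nat \<Rightarrow> rat fps" where
  "u a = Abs_fps (\<lambda>k. if 0 < k \<and> a dvd k then 1 else 0)"

lemma Zs_u[simp]: "Zs (u a)" unfolding Zs_def u_def by simp

lemma u_eq: assumes "a \<ge> 1" shows "(1 - fps_X ^ a) * u a = fps_X ^ a"
proof (rule fps_ext)
  fix k
  have "((1 - fps_X ^ a) * u a) $ k = u a $ k - (fps_X ^ a * u a) $ k"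
    by (simp add: algebra_simps)
  also have "\<dots> = (fps_X ^ a :: rat fps) $ k"
  proof (cases "k < a")
    case True
    then show ?thesis using assms by (auto simp: fps_X_power_mult_nth u_def dest: dvd_imp_le)
  next
    case False
    then have "a dvd k \<longleftrightarrow> a dvd (k - a)" by (simp add: dvd_minus_self)
    then show ?thesis using False assms by (auto simp: fps_X_power_mult_nth u_def)
  qed
  finally show "((1 - fps_X ^ a) * u a) $ k = (fps_X ^ a :: rat fps) $ k" .
qed

lemma kf_gen: fixes x v :: "'a::comm_ring_1"
  assumes "(1 - x) * v = x" shows "(1 - x)^2 * (1 + 2 * v) = 1 - x^2"
proof -
  have "(1 - x)^2 * (1 + 2 * v) = (1 - x)^2 + 2 * (1 - x) * ((1 - x) * v)"
    by (simp add: algebra_simps power2_eq_square)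
  also have "\<dots> = (1 - x)^2 + 2 * (1 - x) * x" by (simp only: assms)
  also have "\<dots> = 1 - x^2" by (simp add: algebra_simps power2_eq_square)
  finally show ?thesis .
qed

lemma key_factor: assumes "a \<ge> 1"
  shows "(1 - fps_X ^ a)^2 * (1 + 2 * u a) = (1 - fps_X ^ (2*a) :: rat fps)"
  using kf_gen[OF u_eq[OF assms]] by (simp add: power_mult mult.commute[of 2 a])

lemma pl_gen: fixes v s W :: "'a::comm_ring_1"
  shows "(1 + 2 * v) * (1 + 2 * s + 4 * W) = 1 + 2 * (v + s) + 4 * (s * v + W + 2 * W * v)"
  by (simp add: algebra_simps)

lemma prod_lin:
  assumes "finite A" "\<And>i. i \<in> A \<Longrightarrow> Zs (v i)"
  shows "\<exists>W. Zs W \<and> (\<Prod>i\<in>A. 1 + 2 * v i) = 1 + 2 * (\<Sum>i\<in>A. v i) + 4 * W"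
  using assms
proof (induction A rule: finite_induct)
  case empty
  then show ?case by (intro exI[of _ 0]) auto
next
  case (insert x F)
  then obtain W where W: "Zs W" "(\<Prod>i\<in>F. 1 + 2 * v i) = 1 + 2 * (\<Sum>i\<in>F. v i) + 4 * W"
    by auto
  define s where "s = (\<Sum>i\<in>F. v i)"
  have Zs_s: "Zs s" unfolding s_def using insert by (intro Zs_sum) auto
  have p1: "(\<Prod>i\<in>insert x F. 1 + 2 * v i) = (1 + 2 * v x) * (1 + 2 * s + 4 * W)"
    using insert W by (simp add: s_def)
  have p2: "(\<Sum>i\<in>insert x F. v i) = v x + s" using insert by (simp add: s_def)
  show ?case using insert Zs_s W p1 p2 pl_gen[of "v x" s W]
    by (intro exI[of _ "s * v x + W + 2 * W * v x"])
       (auto intro!: Zs_add Zs_mult)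
qed


definition P :: "nat \<Rightarrow> nat \<Rightarrow> rat fps" where
  "P N m = (\<Prod>j\<in>{1..N}. (1 - fps_X ^ (j * m)))"
definition S :: "nat \<Rightarrow> rat fps" where
  "S m = Abs_fps (\<lambda>k. if \<exists>j\<ge>1. k = m * j^2 then 1 else 0)"

lemma Zs_P[simp]: "Zs (P N m)" unfolding P_def by (intro Zs_prod Zs_diff) auto
lemma Zs_S[simp]: "Zs (S m)" unfolding S_def Zs_def by simp
lemma prod_nth_0: "(prod f A :: rat fps) $ 0 = prod (\<lambda>i. f i $ 0) A"
  by (induction A rule: infinite_finite_induct) auto
lemma P_0[simp]: "m \<ge> 1 \<Longrightarrow> P N m $ 0 = 1" unfolding P_def by (simp add: prod_nth_0)

lemma mdv4_of: assumes "odd c \<longleftrightarrow> b"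
  shows "mdv 4 (2 * (of_nat c - (if b then 1 else 0)))"
proof -
  have "even (int c - (if b then 1 else 0))" using assms by auto
  then obtain t where t: "int c - (if b then 1 else 0) = 2 * t" by blast
  have "2 * (of_nat c - (if b then 1 else 0)) = (of_int (2 * (int c - (if b then 1 else 0))) :: rat)"
    by simp
  also have "\<dots> = of_int 4 * of_int t" unfolding t by simp
  finally show ?thesis unfolding mdv_def by (intro bexI[of _ "of_int t"]) auto
qed

lemma sum_u_nth: "(\<Sum>j\<in>{1..N}. u (j * m)) $ k = of_nat (card {j\<in>{1..N}. 0 < k \<and> j * m dvd k})"
proof -
  have "(\<Sum>j\<in>{1..N}. u (j * m)) $ k = (\<Sum>j\<in>{1..N}. if 0 < k \<and> j * m dvd k then 1 else 0)"
    by (simp add: fps_sum_nth u_def)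
  also have "\<dots> = (\<Sum>j\<in>{j\<in>{1..N}. 0 < k \<and> j * m dvd k}. 1)"
    by (rule sum.inter_filter[symmetric]) simp
  finally show ?thesis by (simp only: sum_constant mult_1_right)
qed

lemma coeff_S: assumes "m \<ge> 1" "k \<le> N"
  shows "mdv 4 ((1 + 2 * (\<Sum>j\<in>{1..N}. u (j * m))) $ k - (1 + 2 * S m) $ k)"
proof -
  define b where "b = (\<exists>j\<ge>1. k = m * j^2)"
  define c where "c = card {j\<in>{1..N}. 0 < k \<and> j * m dvd k}"
  have eq: "(1 + 2 * (\<Sum>j\<in>{1..N}. u (j * m))) $ k - (1 + 2 * S m) $ k
      = 2 * (of_nat c - (if b then 1 else 0))"
    by (simp add: sum_u_nth[simplified] c_def b_def S_def algebra_simps)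
  have "odd c \<longleftrightarrow> b"
  proof (cases "k > 0 \<and> m dvd k")
    case True
    then obtain k' where k': "k = m * k'" by blast
    have k'0: "k' > 0" using True k' by auto
    have "{j\<in>{1..N}. 0 < k \<and> j * m dvd k} = {d. d dvd k'}"
    proof -
      have "j * m dvd k \<longleftrightarrow> j dvd k'" for j using assms(1) k'
        by (metis mult.commute nat_mult_dvd_cancel_disj not_one_le_zero)
      moreover have "j dvd k' \<Longrightarrow> 1 \<le> j \<and> j \<le> N" for j
        using k'0 assms k' by (metis dvd_imp_le dvd_pos_nat le_trans less_one not_less
            mult_le_mono1 mult_1 order_less_imp_le)
      ultimately show ?thesis using True by auto
    qed
    then have "odd c \<longleftrightarrow> (\<exists>j. k' = j^2)" unfolding c_def using divisor_parity[OF k'0] by simp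
    also have "\<dots> \<longleftrightarrow> b" unfolding b_def k' using assms(1) k'0
      by (metis (no_types, lifting) One_nat_def Suc_leI mult_cancel1 not_one_le_zero
          power_0 power2_eq_square mult_0_right neq0_conv)
    finally show ?thesis .
  next
    case False
    then have "c = 0" unfolding c_def by (auto intro: dvd_mult_left)
    moreover have "\<not> b" using False assms(1) unfolding b_def by auto
    ultimately show ?thesis by simp
  qed
  then show ?thesis unfolding eq by (rule mdv4_of)
qed


lemma core: assumes "m \<ge> 1"
  shows "R 4 N (P N m ^ 2 * (1 + 2 * S m)) (P N (2 * m))"
proof -
  define U where "U = (\<Sum>j\<in>{1..N}. u (j * m))"
  have "P N (2 * m) = (\<Prod>j\<in>{1..N}. (1 - fps_X ^ (j * m))^2 * (1 + 2 * u (j * m)))"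
    unfolding P_def
  proof (rule prod.cong[OF refl])
    fix j assume "j \<in> {1..N}"
    then have "j * m \<ge> 1" using assms by simp
    then show "1 - fps_X ^ (j * (2 * m)) = (1 - fps_X ^ (j * m))^2 * (1 + 2 * u (j * m))"
      using key_factor[of "j*m"] by (simp add: ac_simps)
  qed
  also have "\<dots> = P N m ^ 2 * (\<Prod>j\<in>{1..N}. 1 + 2 * u (j * m))"
    unfolding P_def by (simp add: prod.distrib prod_power_distrib)
  finally have e1: "P N (2 * m) = P N m ^ 2 * (\<Prod>j\<in>{1..N}. 1 + 2 * u (j * m))" .
  obtain W where W: "Zs W" "(\<Prod>j\<in>{1..N}. 1 + 2 * u (j * m)) = 1 + 2 * U + 4 * W"
    using prod_lin[of "{1..N}" "\<lambda>j. u (j * m)"] unfolding U_def by auto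
  have "P N (2 * m) = P N m ^ 2 * (1 + 2 * U) + 4 * (P N m ^ 2 * W)"
    unfolding e1 W(2) by (simp add: algebra_simps)
  then have r1: "R 4 N (P N (2 * m)) (P N m ^ 2 * (1 + 2 * U))"
    by (rule R_exact4) (use W in \<open>auto intro!: Zs_mult Zs_pow\<close>)
  have r2: "R 4 N (1 + 2 * U) (1 + 2 * S m)"
    unfolding R_def U_def using coeff_S[OF assms] by auto
  have "R 4 N (P N m ^ 2 * (1 + 2 * U)) (P N m ^ 2 * (1 + 2 * S m))"
    by (rule R_mult_left[OF r2]) (auto intro: Zs_pow)
  then show ?thesis using r1 by (meson R_sym R_trans)
qed


lemma tail_prod: assumes "finite J" "\<And>j. j \<in> J \<Longrightarrow> j * m > k"
  shows "R 0 k (\<Prod>j\<in>J. (1 - fps_X ^ (j * m))) 1"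
  using assms
proof (induction J rule: finite_induct)
  case empty then show ?case by simp
next
  case (insert x F)
  then have IH: "R 0 k (\<Prod>j\<in>F. (1 - fps_X ^ (j * m))) 1" by auto
  have xk: "x * m > k" using insert by auto
  have "R 0 k ((1 - fps_X ^ (x * m)) * (\<Prod>j\<in>F. (1 - fps_X ^ (j * m)))) (\<Prod>j\<in>F. (1 - fps_X ^ (j * m)))"
    unfolding R_def mdv_0_iff using xk by (auto simp: algebra_simps fps_X_power_mult_nth)
  then show ?case using IH insert by (simp add: R_trans)
qed

lemma Zs_eulerf[simp]: "Zs (eulerf m)"
  unfolding Zs_def eulerf_def
proof
  fix k
  have "Zs (\<Prod>j\<in>{1..k}. (1 - fps_X ^ (j * m)) :: rat fps)" by (intro Zs_prod Zs_diff) auto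
  then show "Abs_fps (\<lambda>k. (\<Prod>j\<in>{1..k}. (1 - fps_X ^ (j * m)) :: rat fps) $ k) $ k \<in> \<int>"
    unfolding Zs_def by simp
qed

lemma eulerf_0[simp]: "eulerf m $ 0 = 1" unfolding eulerf_def by simp

lemma eulerf_P: assumes "m \<ge> 1" shows "R 0 N (eulerf m) (P N m)"
  unfolding R_def mdv_0_iff
proof (intro allI impI)
  fix k assume kN: "k \<le> N"
  define A where "A = (\<Prod>j\<in>{1..k}. (1 - fps_X ^ (j * m)) :: rat fps)"
  define Q where "Q = (\<Prod>j\<in>{k+1..N}. (1 - fps_X ^ (j * m)) :: rat fps)"
  have PAQ: "P N m = A * Q" unfolding P_def A_def Q_def
    by (subst prod.union_disjoint[symmetric]) (use kN in \<open>auto intro!: prod.cong\<close>)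
  have "R 0 k Q 1" unfolding Q_def using assms
  proof (intro tail_prod)
    fix j assume "j \<in> {k+1..N}"
    then have "j > k" by auto
    moreover have "j \<le> j * m" using assms by simp
    ultimately show "j * m > k" by linarith
  qed simp
  moreover have "Zs A" unfolding A_def by (intro Zs_prod Zs_diff) auto
  ultimately have "R 0 k (A * Q) A" using R_mult_left[of 0 k Q 1 A] by simp
  then have "P N m $ k = A $ k" unfolding PAQ R_def mdv_0_iff by auto
  then show "eulerf m $ k - P N m $ k = 0" unfolding eulerf_def A_def by simp
qed


lemma pw_gen: fixes B W :: "'a::comm_ring_1"
  shows "(1 + 2 * B) * (1 + 2 * of_nat e * B + 4 * W) = 1 + 2 * of_nat (Suc e) * B + 4 * (of_nat e * B * B + W + 2 * B * W)"
  by (simp add: algebra_simps)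

lemma pow_lin: assumes "Zs B"
  shows "\<exists>W. Zs W \<and> (1 + 2 * B)^e = 1 + 2 * of_nat e * B + 4 * W"
proof (induction e)
  case 0 then show ?case by (intro exI[of _ 0]) auto
next
  case (Suc e)
  then obtain W where W: "Zs W" "(1 + 2 * B)^e = 1 + 2 * of_nat e * B + 4 * W"
    by auto
  have "(1 + 2 * B)^Suc e = 1 + 2 * of_nat (Suc e) * B + 4 * (of_nat e * B * B + W + 2 * B * W)"
    using W pw_gen[of B e W] by simp
  then show ?case using W assms by (intro exI[of _ "of_nat e * B * B + W + 2 * B * W"])
       (auto intro!: Zs_add Zs_mult)
qed

lemma not_sq_dsq: "(a::nat)^2 = 2 * b^2 \<Longrightarrow> a = 0"
proof (induction a arbitrary: b rule: less_induct)
  case (less a)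
  show ?case
  proof (rule ccontr)
    assume a0: "a \<noteq> 0"
    have "even (a^2)" using less.prems by simp
    then have "even a" by simp
    then obtain a' where a': "a = 2 * a'" by blast
    then have "b^2 = 2 * a'^2" using less.prems by (simp add: power2_eq_square)
    then have "even (b^2)" by simp
    then have "even b" by simp
    then obtain b' where b': "b = 2 * b'" by blast
    have "a'^2 = 2 * b'^2" using \<open>b^2 = 2 * a'^2\<close> b' by (simp add: power2_eq_square)
    moreover have "a' < a" using a' a0 by simp
    ultimately have "a' = 0" using less.IH by blast
    then show False using a' a0 by simp
  qed
qed

lemma sq_conv: assumes "n \<ge> 1" "m \<ge> 1"
  shows "(\<exists>k::int. int n = int m * k^2) \<longleftrightarrow> (\<exists>j\<ge>1. n = m * j^2)"
proof
  assume "\<exists>k::int. int n = int m * k^2"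
  then obtain k where k: "int n = int m * k^2" by blast
  have "int n = int m * int (nat \<bar>k\<bar>)^2" using k by simp
  then have "n = m * (nat \<bar>k\<bar>)^2" by (metis of_nat_eq_iff of_nat_mult of_nat_power)
  moreover then have "nat \<bar>k\<bar> \<ge> 1" using assms by (cases "nat \<bar>k\<bar>") auto
  ultimately show "\<exists>j\<ge>1. n = m * j^2" by blast
next
  assume "\<exists>j\<ge>1. n = m * j^2"
  then obtain j where "n = m * j^2" by blast
  then show "\<exists>k::int. int n = int m * k^2" by (intro exI[of _ "int j"]) simp
qed


lemma hh_gen: fixes S1 S2 W :: "'a::comm_ring_1"
  shows "(1 + 2 * S1) * (1 + 2 * of_nat e * S2 + 4 * W) = (1 + 2 * S1 + 2 * (of_nat e * S2)) + 4 * (W + 2 * S1 * W + of_nat e * S1 * S2)"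
  by (simp add: algebra_simps)

theorem theorem1p1:
  fixes c n :: nat
  assumes "c \<ge> 1" and "n \<ge> 1"
  shows "\<exists>t::int. abar c n =
           of_int ((if \<exists>k::int. int n = k^2 then 2
                    else if \<exists>k::int. int n = 2 * k^2 then 2 * (int c + 1)
                    else 0) + 4 * t)"
proof -
  define N where "N = n"
  define D where "D = eulerf 1 ^ 2 * eulerf 2 ^ (2 * c)"
  define Nn where "Nn = eulerf 4 ^ (c - 1) * eulerf 2 ^ 3"
  define G where "G = overcubic_gf c"
  define D' where "D' = P N 1 ^ 2 * P N 2 ^ (2 * c)"
  define N' where "N' = P N 4 ^ (c - 1) * P N 2 ^ 3"
  define H where "H = 1 + 2 * S 1 + 2 * (of_nat (c - 1) * S 2)"
  have ZD: "Zs D" unfolding D_def by (auto intro!: Zs_mult Zs_pow)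
  have D0: "D $ 0 = 1" unfolding D_def by (simp add: fps_nth_power_0)
  have ZH: "Zs H" unfolding H_def by (auto intro!: Zs_mult Zs_add)
  have ZiD: "Zs (inverse D)" using ZD D0 by (rule Zs_inverse)
  have GD: "D * G = Nn" unfolding G_def overcubic_gf_def Nn_def D_def[symmetric]
    using inverse_mult_eq_1[of D] D0 by (simp add: algebra_simps)
  have rD: "R 0 N D D'" unfolding D_def D'_def
    by (intro R_mult R_pow eulerf_P) (auto intro!: Zs_pow)
  have rN: "R 0 N Nn N'" unfolding Nn_def N'_def
    by (intro R_mult R_pow eulerf_P) (auto intro!: Zs_pow)
  obtain W where W: "Zs W" "(1 + 2 * S 2)^(c-1) = 1 + 2 * of_nat (c-1) * S 2 + 4 * W"
    using pow_lin[of "S 2" "c - 1"] by auto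
  have "(1 + 2 * S 1) * (1 + 2 * S 2)^(c-1)
      = H + 4 * (W + 2 * S 1 * W + of_nat (c-1) * S 1 * S 2)"
    unfolding W(2) H_def by (rule hh_gen)
  then have r1: "R 4 N ((1 + 2 * S 1) * (1 + 2 * S 2)^(c-1)) H"
    by (rule R_exact4) (use W in \<open>auto intro!: Zs_add Zs_mult\<close>)
  have ZE: "Zs ((1 + 2 * S 1) * (1 + 2 * S 2)^(c-1))"
    by (auto intro!: Zs_mult Zs_add Zs_pow)
  have r2: "R 4 N (D' * H) (D' * ((1 + 2 * S 1) * (1 + 2 * S 2)^(c-1)))"
    by (rule R_mult_left[OF R_sym[OF r1]]) (auto simp: D'_def intro!: Zs_mult Zs_pow)
  have ceq: "2 * c = 2 + 2 * (c - 1)" using assms by simp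
  have e3: "D' * ((1 + 2 * S 1) * (1 + 2 * S 2)^(c-1))
      = (P N 1 ^ 2 * (1 + 2 * S 1)) * P N 2 ^ 2 * (P N 2 ^ 2 * (1 + 2 * S 2))^(c-1)"
  proof -
    have "P N 2 ^ (2*c) = P N 2 ^ 2 * (P N 2 ^ 2)^(c-1)" by (metis ceq power_add power_mult)
    then show ?thesis unfolding D'_def power_mult_distrib by (simp only: mult_ac)
  qed
  have c1: "R 4 N (P N 1 ^ 2 * (1 + 2 * S 1)) (P N 2)" using core[of 1 N] by simp
  have c2: "R 4 N (P N 2 ^ 2 * (1 + 2 * S 2)) (P N 4)" using core[of 2 N] by simp
  have r3: "R 4 N ((P N 1 ^ 2 * (1 + 2 * S 1)) * P N 2 ^ 2 * (P N 2 ^ 2 * (1 + 2 * S 2))^(c-1))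
                  (P N 2 * P N 2 ^ 2 * P N 4 ^ (c - 1))"
    by (intro R_mult[OF R_mult[OF c1 R_refl]] R_pow[OF c2])
       (auto intro!: Zs_mult Zs_pow Zs_add)
  have e4: "P N 2 * P N 2 ^ 2 * P N 4 ^ (c - 1) = N'" unfolding N'_def
    by (simp add: algebra_simps power3_eq_cube power2_eq_square)
  have r4: "R 4 N (D' * H) N'" using r2 r3 unfolding e3 e4 by (rule R_trans)
  have r5: "R 4 N (D * H) (D' * H)" by (rule R_mult_right[OF R_0_M[OF rD] ZH])
  have r6: "R 4 N (D * H) (D * G)" unfolding GD
    using R_trans[OF R_trans[OF r5 r4] R_sym[OF R_0_M[OF rN]]] .
  have "R 4 N (inverse D * (D * H)) (inverse D * (D * G))" by (rule R_mult_left[OF r6 ZiD])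
  then have "R 4 N H G" using inverse_mult_eq_1[of D] D0 by (simp add: mult.assoc[symmetric])
  then have "mdv 4 (H $ n - G $ n)" unfolding R_def N_def by simp
  then obtain y where y: "y \<in> \<int>" "H $ n - G $ n = 4 * y" unfolding mdv_def by auto
  then obtain y' where y': "y = of_int y'" by (metis Ints_cases)
  have Gn: "abar c n = H $ n - 4 * of_int y'" unfolding abar_def G_def[symmetric] using y y' by simp
  define b1 where "b1 = (\<exists>j\<ge>1. n = 1 * j^2)"
  define b2 where "b2 = (\<exists>j\<ge>1. n = 2 * j^2)"
  have sq1: "(\<exists>k::int. int n = k^2) \<longleftrightarrow> b1"
    unfolding b1_def using sq_conv[of n 1] assms by simp
  have sq2: "(\<exists>k::int. int n = 2 * k^2) \<longleftrightarrow> b2"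
    unfolding b2_def using sq_conv[of n 2] assms by simp
  have excl: "\<not> (b1 \<and> b2)"
    unfolding b1_def b2_def using not_sq_dsq assms by force
  have n0: "n \<noteq> 0" using assms by simp
  have Hn: "H $ n = 2 * (if b1 then 1 else 0) + 2 * of_nat (c - 1) * (if b2 then 1 else 0)"
    unfolding H_def S_def b1_def b2_def using n0 by (simp split del: if_split)
  show ?thesis
  proof (cases "\<exists>k::int. int n = k^2")
    case True
    then have "H $ n = 2" using Hn excl sq1 by auto
    then show ?thesis using True Gn by (intro exI[of _ "- y'"]) simp
  next
    case False
    note F1 = False
    show ?thesis
    proof (cases "\<exists>k::int. int n = 2 * k^2")
      case True
      then have "H $ n = 2 * of_nat (c - 1)" using Hn F1 sq1 sq2 by auto
      then show ?thesis using True F1 Gn assms by (intro exI[of _ "- y' - 1"]) (simp add: of_nat_diff algebra_simps)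
    next
      case False
      then have "H $ n = 0" using Hn F1 sq1 sq2 by auto
      then show ?thesis using False F1 Gn by (intro exI[of _ "- y'"]) simp
    qed
  qed
qed

end
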